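(* Let $G=(V,E)$ be a finite graph with couplings $J_e>0$. Then the XOR-Ising measure satisfies, for all $\sigma\in\{-1,+1\}^V$, $$\mu^{\mathrm{XOR}}[\sigma]\propto Z_{S(\sigma),2J}.$$
   Context: $S(\sigma)=\{uv\in E\mid\sigma_u=\sigma_v\}$. For $H\subset E$ and couplings $K$, $Z_{H,K}=\sum_{\tau\in\{\pm1\}^V}\exp(\sum_{uv\in H}K_{uv}\tau_u\tau_v)$ is the Ising partition function on the spanning subgraph $(V,H)$; $2J=(2J_e)_e$. The Ising measure on $G$ is $\mu[\tau]\propto\exp(\sum_{uv\in E}J_{uv}\tau_u\tau_v)$, and $\mu^{\mathrm{XOR}}$ is the law of the pointwise product $\tau^1\tau^2$ of two independent samples of $\mu$. *)

theory Defs
  imports Complex_Main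
begin

text \<open>A spin configuration is a function V -> {-1,+1}; outside V it is fixed to 1
  (so configurations are in bijection with {-1,+1}^V).\<close>

definition spins :: "'v set \<Rightarrow> ('v \<Rightarrow> real) set" where
  "spins V = {\<tau>. (\<forall>v\<in>V. \<tau> v = 1 \<or> \<tau> v = -1) \<and> (\<forall>v. v \<notin> V \<longrightarrow> \<tau> v = 1)}"

text \<open>Boltzmann weight exp(sum over uv in H of K_uv tau_u tau_v); for e = {u,v}, tau_u tau_v = prod over e.\<close>
definition ising_weight :: "'v set set \<Rightarrow> ('v set \<Rightarrow> real) \<Rightarrow> ('v \<Rightarrow> real) \<Rightarrow> real" where
  "ising_weight H K \<tau> = exp (\<Sum>e\<in>H. K e * (\<Prod>v\<in>e. \<tau> v))"

definition ising_Z :: "'v set \<Rightarrow> 'v set set \<Rightarrow> ('v set \<Rightarrow> real) \<Rightarrow> real" where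
  "ising_Z V H K = (\<Sum>\<tau>\<in>spins V. ising_weight H K \<tau>)"

definition ising_mu :: "'v set \<Rightarrow> 'v set set \<Rightarrow> ('v set \<Rightarrow> real) \<Rightarrow> ('v \<Rightarrow> real) \<Rightarrow> real" where
  "ising_mu V E J \<tau> = ising_weight E J \<tau> / ising_Z V E J"

definition xor_mu :: "'v set \<Rightarrow> 'v set set \<Rightarrow> ('v set \<Rightarrow> real) \<Rightarrow> ('v \<Rightarrow> real) \<Rightarrow> real" where
  "xor_mu V E J \<sigma> =
     (\<Sum>p\<in>spins V \<times> spins V.
        if (\<lambda>v. fst p v * snd p v) = \<sigma> then ising_mu V E J (fst p) * ising_mu V E J (snd p) else 0)"

definition same_spin_edges :: "'v set set \<Rightarrow> ('v \<Rightarrow> real) \<Rightarrow> 'v set set" where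
  "same_spin_edges E \<sigma> = {e\<in>E. \<forall>u\<in>e. \<forall>v\<in>e. \<sigma> u = \<sigma> v}"

end

theory Submission
  imports Defs
begin

lemma spins_finite: "finite V \<Longrightarrow> finite (spins V)"
proof -
  assume f: "finite V"
  have "spins V \<subseteq> {f. \<forall>x. (x \<in> V \<longrightarrow> f x \<in> {1,-1}) \<and> (x \<notin> V \<longrightarrow> f x = 1)}"
    unfolding spins_def by auto
  moreover have "finite {f. \<forall>x. (x \<in> V \<longrightarrow> f x \<in> {1::real,-1}) \<and> (x \<notin> V \<longrightarrow> f x = 1)}"
    by (rule finite_set_of_finite_funs) (use f in auto)
  ultimately show ?thesis by (rule finite_subset)
qed

lemma spins_sq: "\<tau> \<in> spins V \<Longrightarrow> \<tau> v * \<tau> v = 1"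
  unfolding spins_def by (cases "v \<in> V") auto

lemma pm1: "(a::real) = 1 \<or> a = -1 \<Longrightarrow> b = 1 \<or> b = -1 \<Longrightarrow> a*b = 1 \<or> a*b = -1"
  by auto

lemma spins_mult: "\<tau> \<in> spins V \<Longrightarrow> \<sigma> \<in> spins V \<Longrightarrow> (\<lambda>v. \<tau> v * \<sigma> v) \<in> spins V"
  unfolding spins_def using pm1 by auto

lemma Z_pos: "finite V \<Longrightarrow> ising_Z V H K > 0"
proof -
  assume f: "finite V"
  have "(\<lambda>v. 1) \<in> spins V" unfolding spins_def by auto
  then have "spins V \<noteq> {}" by auto
  then show ?thesis unfolding ising_Z_def ising_weight_def
    using spins_finite[OF f] by (intro sum_pos) auto
qed

lemma edge_term:
  assumes "card e = 2" and s: "\<sigma> \<in> spins V" and "e \<in> E"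
  shows "J e * (\<Prod>v\<in>e. \<tau> v) + J e * (\<Prod>v\<in>e. \<tau> v * \<sigma> v)
       = (if e \<in> same_spin_edges E \<sigma> then 2 * J e * (\<Prod>v\<in>e. \<tau> v) else 0)"
proof -
  obtain a b where e: "e = {a,b}" "a \<noteq> b" using assms(1) by (meson card_2_iff)
  have sa: "\<sigma> a = 1 \<or> \<sigma> a = -1" and sb: "\<sigma> b = 1 \<or> \<sigma> b = -1"
    using s unfolding spins_def by (cases "a \<in> V"; auto)+
  have iff: "e \<in> same_spin_edges E \<sigma> \<longleftrightarrow> \<sigma> a = \<sigma> b"
    unfolding same_spin_edges_def using e \<open>e \<in> E\<close> by auto
  have p: "(\<Prod>v\<in>e. \<tau> v * \<sigma> v) = (\<Prod>v\<in>e. \<tau> v) * (\<sigma> a * \<sigma> b)"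
    using e by (simp add: prod.distrib)
  show ?thesis
  proof (cases "\<sigma> a = \<sigma> b")
    case True
    then have "\<sigma> a * \<sigma> b = 1" using sa by auto
    then show ?thesis unfolding p iff using True by simp
  next
    case False
    then have "\<sigma> a * \<sigma> b = -1" using sa sb by auto
    then show ?thesis unfolding p iff using False by simp
  qed
qed

theorem lemmaA3:
  fixes V :: "'v set" and E :: "'v set set" and J :: "'v set \<Rightarrow> real"
  assumes "finite V"
    and "\<forall>e\<in>E. e \<subseteq> V \<and> card e = 2"
    and "\<forall>e\<in>E. J e > 0"
  shows "\<exists>c>0. \<forall>\<sigma>\<in>spins V.
           xor_mu V E J \<sigma> = c * ising_Z V (same_spin_edges E \<sigma>) (\<lambda>e. 2 * J e)"
proof (intro exI conjI ballI)
  define Z where "Z = ising_Z V E J"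
  have Zp: "Z > 0" unfolding Z_def by (rule Z_pos[OF assms(1)])
  show "1 / (Z * Z) > 0" using Zp by simp
  have finS: "finite (spins V)" by (rule spins_finite[OF assms(1)])
  have finE: "finite E"
    by (rule finite_subset[of E "Pow V"]) (use assms(1,2) in auto)
  fix \<sigma> assume s: "\<sigma> \<in> spins V"
  have inner: "(\<Sum>t2\<in>spins V. if (\<lambda>v. t v * t2 v) = \<sigma> then ising_mu V E J t * ising_mu V E J t2 else 0)
      = ising_mu V E J t * ising_mu V E J (\<lambda>v. t v * \<sigma> v)" if t: "t \<in> spins V" for t
  proof -
    have "\<And>t2. ((\<lambda>v. t v * t2 v) = \<sigma>) = ((\<lambda>v. t v * \<sigma> v) = t2)"
    proof -
      fix t2
      have "\<And>v. (t v * t2 v = \<sigma> v) = (t v * \<sigma> v = t2 v)"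
      proof -
        fix v
        have tt: "t v * t v = 1" by (rule spins_sq[OF t])
        show "(t v * t2 v = \<sigma> v) = (t v * \<sigma> v = t2 v)"
        proof
          assume "t v * t2 v = \<sigma> v"
          then have "t v * \<sigma> v = (t v * t v) * t2 v" by (simp add: mult.assoc)
          then show "t v * \<sigma> v = t2 v" using tt by simp
        next
          assume "t v * \<sigma> v = t2 v"
          then have "t v * t2 v = (t v * t v) * \<sigma> v" by (simp add: mult.assoc)
          then show "t v * t2 v = \<sigma> v" using tt by simp
        qed
      qed
      then show "((\<lambda>v. t v * t2 v) = \<sigma>) = ((\<lambda>v. t v * \<sigma> v) = t2)"
        by (auto simp: fun_eq_iff)
    qed
    then show ?thesis using finS spins_mult[OF t s] by simp
  qed
  have w: "ising_weight E J t * ising_weight E J (\<lambda>v. t v * \<sigma> v)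
      = ising_weight (same_spin_edges E \<sigma>) (\<lambda>e. 2 * J e) t" for t
  proof -
    have "(\<Sum>e\<in>E. J e * (\<Prod>v\<in>e. t v)) + (\<Sum>e\<in>E. J e * (\<Prod>v\<in>e. t v * \<sigma> v))
        = (\<Sum>e\<in>E. if e \<in> same_spin_edges E \<sigma> then 2 * J e * (\<Prod>v\<in>e. t v) else 0)"
      unfolding sum.distrib[symmetric] using edge_term[OF _ s] assms(2)
      by (intro sum.cong) auto
    also have "\<dots> = (\<Sum>e\<in>same_spin_edges E \<sigma>. 2 * J e * (\<Prod>v\<in>e. t v))"
      proof -
        have "{e\<in>E. e \<in> same_spin_edges E \<sigma>} = same_spin_edges E \<sigma>"
          by (auto simp: same_spin_edges_def)
        then show ?thesis
          using sum.inter_filter[OF finE, of "\<lambda>e. 2 * J e * (\<Prod>v\<in>e. t v)" "\<lambda>e. e \<in> same_spin_edges E \<sigma>"]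
          by simp
      qed
    finally show ?thesis unfolding ising_weight_def exp_add[symmetric] by simp
  qed
  have "xor_mu V E J \<sigma> = (\<Sum>t\<in>spins V. ising_mu V E J t * ising_mu V E J (\<lambda>v. t v * \<sigma> v))"
    unfolding xor_mu_def sum.cartesian_product' by (rule sum.cong) (simp_all only: fst_conv snd_conv inner)
  also have "\<dots> = (\<Sum>t\<in>spins V. ising_weight (same_spin_edges E \<sigma>) (\<lambda>e. 2 * J e) t) / (Z * Z)"
    unfolding ising_mu_def Z_def[symmetric] sum_divide_distrib w[symmetric] by simp
  also have "\<dots> = 1 / (Z * Z) * ising_Z V (same_spin_edges E \<sigma>) (\<lambda>e. 2 * J e)"
    unfolding ising_Z_def by simp
  finally show "xor_mu V E J \<sigma> = 1 / (Z * Z) * ising_Z V (same_spin_edges E \<sigma>) (\<lambda>e. 2 * J e)" .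
qed

end
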